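(* Let $q$ be a power of a prime $p$, and let $h(x) = x^6 + a_1 x^5 + a_2 x^4 + a_3 x^3 + a_2 q x^2 + a_1 q^2 x + q^3$ with $a_1,a_2,a_3 \in \mathbb{Z}$. Then $h(x) \in W_q(3)$ if and only if all of the following hold: (a) $|a_1| \leq 6\sqrt{q}$; (b* ) $4\sqrt{q}\,|a_1| - 9q \leq a_2$; (b) $a_2 \leq \frac{1}{3}a_1^2 + 3q$; (c) $-\frac{2}{27}a_1^3 + \frac{1}{3}a_1a_2 + qa_1 - \frac{2}{27}(a_1^2 - 3a_2 + 9q)^{3/2} \leq a_3 \leq -\frac{2}{27}a_1^3 + \frac{1}{3}a_1a_2 + qa_1 + \frac{2}{27}(a_1^2 - 3a_2 + 9q)^{3/2}$; (d) $-2qa_1 - 2\sqrt{q}\,a_2 - 2q\sqrt{q} \leq a_3 \leq -2qa_1 + 2\sqrt{q}\,a_2 + 2q\sqrt{q}$; where the quantity $a_1^2 - 3a_2 + 9q$ in (c) is a non-negative real number by (b). Moreover, a polynomial $h(x) \in W_q(3)$ has a real root if and only if at least one of the inequalities in (a), (b* ) or (d) is an equality. Explicitly, $h(x)$ lies in $W_q(3)$ and has a real root if and only if there are non-negative integers $k,\ell$ such that exactly one of the following (mutually exclusive) cases occurs: (I) $q$ is not a square and $h(x) = (x^2-q)^2 h_0(x)$ with $h_0(x) \in W_q(1)$; (II) $q$ is a square, $k+\ell = 3$ and $h(x) = (x+\sqrt{q})^{2k}(x-\sqrt{q})^{2\ell}$; (III) $q$ is a square, $k+\ell=2$ and $h(x)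 = (x+\sqrt{q})^{2k}(x-\sqrt{q})^{2\ell}h_0(x)$ with $h_0(x) \in W_q(1)$ having no real roots; (IV) $q$ is a square, $k+\ell = 1$ and $h(x) = (x+\sqrt{q})^{2k}(x-\sqrt{q})^{2\ell}h_0(x)$ with $h_0(x) \in W_q(2)$ having no real roots.
   Context: A $q$-Weil polynomial is a monic polynomial in $\mathbb{Z}[x]$ of even positive degree $2g$ whose set of complex roots has the form $\{w_1,\bar w_1,\ldots,w_g,\bar w_g\}$ with $|w_i| = \sqrt{q}$ for every $i$. $W_q(g)$ denotes the set of $q$-Weil polynomials of degree $2g$. For a positive real $r$, $\sqrt[n]{r} = r^{1/n}$ denotes the positive real $n$-th root (so $(\cdot)^{3/2}$ of a non-negative real is non-negative real). *)

theory Defs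
  imports "HOL-Computational_Algebra.Polynomial" Complex_Main
begin

definition weil_poly :: "nat \<Rightarrow> nat \<Rightarrow> int poly \<Rightarrow> bool" where
  "weil_poly q g P \<longleftrightarrow> g > 0 \<and> degree P = 2 * g \<and> lead_coeff P = 1 \<and>
     (\<exists>w :: nat \<Rightarrow> complex. (\<forall>i<g. cmod (w i) = sqrt (real q)) \<and>
        map_poly complex_of_int P = (\<Prod>i<g. [:- w i, 1:] * [:- cnj (w i), 1:]))"

definition has_real_root :: "int poly \<Rightarrow> bool" where
  "has_real_root P \<longleftrightarrow> (\<exists>x::real. poly (map_poly real_of_int P) x = 0)"

end

theory Submission
  imports Defs
begin


lemma mapi_add: "map_poly real_of_int (p + q) = map_poly real_of_int p + map_poly real_of_int q"
  by (rule poly_eqI) (simp add: coeff_map_poly)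
lemma mapi_mult: "map_poly real_of_int (p * q) = map_poly real_of_int p * map_poly real_of_int q"
  by (rule poly_eqI) (simp add: coeff_map_poly coeff_mult)
lemma mapi_power: "map_poly real_of_int (p ^ n) = map_poly real_of_int p ^ n"
  by (induction n) (simp_all add: mapi_mult)
lemma mapi_inj: "map_poly real_of_int p = map_poly real_of_int q \<Longrightarrow> p = q"
  by (rule poly_eqI) (metis coeff_map_poly of_int_0 of_int_eq_iff)
lemma mapr_mult: "map_poly complex_of_real (p * q) = map_poly complex_of_real p * map_poly complex_of_real q"
  by (rule poly_eqI) (simp add: coeff_map_poly coeff_mult)
lemma mapr_prod: "map_poly complex_of_real (\<Prod>i<(g::nat). f i) = (\<Prod>i<g. map_poly complex_of_real (f i))"
  by (induction g) (simp_all add: mapr_mult)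
lemma mapr_inj: "map_poly complex_of_real p = map_poly complex_of_real q \<Longrightarrow> p = q"
  by (rule poly_eqI) (metis coeff_map_poly of_real_0 of_real_eq_iff)
lemma mapi_pCons: "map_poly real_of_int (pCons a p) = pCons (real_of_int a) (map_poly real_of_int p)"
  by (simp add: map_poly_pCons)

lemma quad_cnj: "[:- w, 1:] * [:- cnj w, 1:] = map_poly complex_of_real [: cmod w ^ 2, - (2 * Re w), 1:]"
proof -
  have 1: "w * cnj w = complex_of_real (cmod w ^ 2)" by (rule complex_norm_square[symmetric])
  have 2: "w + cnj w = complex_of_real (2*Re w)" by (rule complex_add_cnj)
  have "[:-w,1:]*[:-cnj w,1:] = [: w*cnj w, -(w + cnj w), 1:]" by (simp add: algebra_simps)
  also have "\<dots> = [: complex_of_real (cmod w ^ 2), -complex_of_real (2*Re w), 1:]" by (simp only: 1 2)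
  finally show ?thesis by (simp add: map_poly_pCons)
qed

lemma WG: "weil_poly q g P \<longleftrightarrow> g > 0 \<and> (\<exists>t. (\<forall>i<g. \<bar>t i\<bar> \<le> 2 * sqrt (real q)) \<and>
   map_poly real_of_int P = (\<Prod>i<g. [:real q, - t i, 1:]))"
proof -
  have cm: "map_poly complex_of_int P = map_poly complex_of_real (map_poly real_of_int P)"
    by (simp add: map_poly_map_poly o_def)
  show ?thesis
  proof
    assume "weil_poly q g P"
    then obtain w where g: "g > 0" and w: "\<forall>i<g. cmod (w i) = sqrt (real q)"
      and e: "map_poly complex_of_int P = (\<Prod>i<g. [:- w i, 1:] * [:- cnj (w i), 1:])"
      unfolding weil_poly_def by blast
    define t where "t i = 2 * Re (w i)" for i
    have "(\<Prod>i<g. [:- w i, 1:] * [:- cnj (w i), 1:]) = (\<Prod>i<g. map_poly complex_of_real [:real q, - t i, 1:])"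
      by (rule prod.cong[OF refl]) (subst quad_cnj, simp add: w t_def)
    also have "\<dots> = map_poly complex_of_real (\<Prod>i<g. [:real q, - t i, 1:])" by (simp add: mapr_prod)
    finally have "map_poly real_of_int P = (\<Prod>i<g. [:real q, - t i, 1:])"
      using e cm mapr_inj by metis
    moreover have "\<forall>i<g. \<bar>t i\<bar> \<le> 2 * sqrt (real q)"
      using w abs_Re_le_cmod unfolding t_def by (metis abs_mult abs_numeral mult_le_cancel_left_pos zero_less_numeral)
    ultimately show "g > 0 \<and> (\<exists>t. (\<forall>i<g. \<bar>t i\<bar> \<le> 2 * sqrt (real q)) \<and>
      map_poly real_of_int P = (\<Prod>i<g. [:real q, - t i, 1:]))" using g by blast
  next
    assume "g > 0 \<and> (\<exists>t. (\<forall>i<g. \<bar>t i\<bar> \<le> 2 * sqrt (real q)) \<and>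
      map_poly real_of_int P = (\<Prod>i<g. [:real q, - t i, 1:]))"
    then obtain t where g: "g > 0" and tb: "\<forall>i<g. \<bar>t i\<bar> \<le> 2 * sqrt (real q)"
      and e: "map_poly real_of_int P = (\<Prod>i<g. [:real q, - t i, 1:])" by blast
    define w where "w i = Complex (t i / 2) (sqrt (real q - (t i / 2)^2))" for i
    have wm: "cmod (w i) = sqrt (real q)" and wr: "2 * Re (w i) = t i" if "i < g" for i
    proof -
      have "\<bar>t i / 2\<bar> \<le> sqrt (real q)" using tb that by (simp add: mult.commute)
      hence "(t i / 2)^2 \<le> sqrt (real q) ^ 2"
        by (metis abs_le_square_iff abs_of_nonneg real_sqrt_ge_zero of_nat_0_le_iff)
      hence "(t i / 2)^2 \<le> real q" by simp
      thus "cmod (w i) = sqrt (real q)" by (simp add: w_def cmod_def)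
      show "2 * Re (w i) = t i" by (simp add: w_def)
    qed
    have "map_poly complex_of_int P = map_poly complex_of_real (\<Prod>i<g. [:real q, - t i, 1:])"
      using cm e by simp
    also have "\<dots> = (\<Prod>i<g. map_poly complex_of_real [:real q, - t i, 1:])" by (simp add: mapr_prod)
    also have "\<dots> = (\<Prod>i<g. [:- w i, 1:] * [:- cnj (w i), 1:])"
      by (rule prod.cong[OF refl]) (subst quad_cnj, simp add: wm wr)
    finally have e2: "map_poly complex_of_int P = (\<Prod>i<g. [:- w i, 1:] * [:- cnj (w i), 1:])" .
    have dm: "degree (map_poly real_of_int P) = degree P" by (rule degree_map_poly) simp
    moreover have "degree (\<Prod>i<g. [:real q, - t i, 1:]) = 2 * g"
      by (subst degree_prod_eq_sum_degree) auto
    moreover have "lead_coeff (map_poly real_of_int P) = real_of_int (lead_coeff P)"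
      by (simp add: dm coeff_map_poly)
    moreover have "lead_coeff (\<Prod>i<g. [:real q, - t i, 1:]) = 1"
      by (simp add: lead_coeff_prod)
    ultimately have "degree P = 2 * g" "lead_coeff P = 1" using e by auto
    then show "weil_poly q g P" unfolding weil_poly_def using g e2 wm by blast
  qed
qed



lemma p32: "(X::real) \<ge> 0 \<Longrightarrow> X powr (3/2) = sqrt X ^ 3"
proof (cases "X = 0")
  case False
  assume "X \<ge> 0"
  hence "sqrt X ^ 3 = (X powr (1/2)) ^ 3" by (simp add: powr_half_sqrt)
  also have "\<dots> = X powr (real 3 * (1/2))" using False by (rule powr_power)
  finally show ?thesis by simp
qed simp

lemma CUB_fwd:
  fixes a1 a2 a3 Q r x y z :: real
  assumes Qr: "Q = r^2" and r: "r > 0"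
    and b: "\<bar>x\<bar> \<le> 2*r" "\<bar>y\<bar> \<le> 2*r" "\<bar>z\<bar> \<le> 2*r"
    and e1: "a1 = -(x+y+z)" and e2: "a2 = 3*Q + (x*y+x*z+y*z)" and e3: "a3 = -(x*y*z) - 2*Q*(x+y+z)"
  shows "\<bar>a1\<bar> \<le> 6 * r \<and>
      4 * r * \<bar>a1\<bar> - 9 * Q \<le> a2 \<and>
      a2 \<le> (1/3) * a1 ^ 2 + 3 * Q \<and>
      - (2/27) * a1 ^ 3 + (1/3) * a1 * a2 + Q * a1
        - (2/27) * (a1 ^ 2 - 3 * a2 + 9 * Q) powr (3/2) \<le> a3 \<and>
      a3 \<le> - (2/27) * a1 ^ 3 + (1/3) * a1 * a2 + Q * a1
        + (2/27) * (a1 ^ 2 - 3 * a2 + 9 * Q) powr (3/2) \<and>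
      - 2 * Q * a1 - 2 * r * a2 - 2 * Q * r \<le> a3 \<and>
      a3 \<le> - 2 * Q * a1 + 2 * r * a2 + 2 * Q * r"
proof -
  have bx: "-2*r \<le> x" "x \<le> 2*r" "-2*r \<le> y" "y \<le> 2*r" "-2*r \<le> z" "z \<le> 2*r"
    using b by (auto simp: abs_le_iff)
  have A: "\<bar>a1\<bar> \<le> 6 * r" using bx e1 by (auto simp: abs_le_iff)
  have Bs: "4 * r * \<bar>a1\<bar> - 9 * Q \<le> a2"
  proof (cases "a1 \<le> 0")
    case True
    have "0 \<le> (2*r-x)*(2*r-y) + (2*r-x)*(2*r-z) + (2*r-y)*(2*r-z)"
      using bx by (intro add_nonneg_nonneg mult_nonneg_nonneg) auto
    moreover have "(2*r-x)*(2*r-y) + (2*r-x)*(2*r-z) + (2*r-y)*(2*r-z)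
       = 12*r^2 - 4*r*\<bar>a1\<bar> + (x*y+x*z+y*z)"
      using True by (simp add: e1 abs_of_nonpos algebra_simps power2_eq_square)
    ultimately show ?thesis using e2 Qr by linarith
  next
    case False
    have h: "0 \<le> 2*r+x" "0 \<le> 2*r+y" "0 \<le> 2*r+z" using bx by auto
    have "0 \<le> (2*r+x)*(2*r+y) + (2*r+x)*(2*r+z) + (2*r+y)*(2*r+z)"
      by (metis add_nonneg_nonneg mult_nonneg_nonneg h)
    moreover have "(2*r+x)*(2*r+y) + (2*r+x)*(2*r+z) + (2*r+y)*(2*r+z)
       = 12*r^2 - 4*r*\<bar>a1\<bar> + (x*y+x*z+y*z)"
      using False by (simp add: e1 algebra_simps power2_eq_square)
    ultimately show ?thesis using e2 Qr by linarith
  qed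
  define X where "X = a1 ^ 2 - 3 * a2 + 9 * Q"
  have Xe: "2 * X = (x-y)^2 + (x-z)^2 + (y-z)^2"
    unfolding X_def e1 e2 Qr by (simp add: algebra_simps power2_eq_square)
  have X0: "X \<ge> 0" using Xe by (smt (verit) zero_le_power2)
  have Bb: "a2 \<le> (1/3) * a1 ^ 2 + 3 * Q" using X0 unfolding X_def by simp
  define M where "M = - (2/27) * a1 ^ 3 + (1/3) * a1 * a2 + Q * a1"
  define N where "N = 27 * a3 + 2 * a1^3 - 9 * a1 * a2 - 27 * Q * a1"
  have NM: "N = 27 * (a3 - M)" unfolding N_def M_def by (simp add: algebra_simps)
  have disc0: "4 * X^3 - N^2 = 27 * ((x-y)*(x-z)*(y-z))^2"
    unfolding X_def N_def e1 e2 e3 Qr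
    by (simp add: algebra_simps power2_eq_square power3_eq_cube)
  have disc: "4 * X^3 - 729 * (a3 - M)^2 = 27 * ((x-y)*(x-z)*(y-z))^2"
  proof -
    have "(27*(a3-M))^2 = 729*(a3-M)^2" by (simp add: power2_eq_square algebra_simps)
    thus ?thesis using disc0 NM by metis
  qed
  have "729 * (a3 - M)^2 \<le> 4 * X^3" using disc by (smt (verit) zero_le_power2)
  moreover have S2: "(sqrt X ^ 3)^2 = X^3" using X0
    by (metis power_mult_distrib real_sqrt_pow2 power_mult mult.commute)
  moreover have "((2/27) * sqrt X ^ 3)^2 = 4 * (sqrt X ^ 3)^2 / 729"
    by (simp add: power2_eq_square)
  ultimately have "(a3 - M)^2 \<le> ((2/27) * sqrt X ^ 3)^2" by linarith
  hence "\<bar>a3 - M\<bar> \<le> (2/27) * sqrt X ^ 3"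
    by (subst power2_le_iff_abs_le[symmetric]) (auto simp: X0)
  hence C: "M - (2/27) * X powr (3/2) \<le> a3 \<and> a3 \<le> M + (2/27) * X powr (3/2)"
    using p32[OF X0] by (simp only: abs_le_iff) linarith
  have "0 \<le> (2*r-x)*(2*r-y)*(2*r-z)" using bx by (intro mult_nonneg_nonneg) auto
  moreover have "(2*r-x)*(2*r-y)*(2*r-z) = a3 + 2*Q*a1 + 2*r*a2 + 2*Q*r"
    unfolding e1 e2 e3 Qr by (simp add: algebra_simps power2_eq_square power3_eq_cube)
  moreover have "0 \<le> (2*r+x)*(2*r+y)*(2*r+z)"
  proof -
    have h: "0 \<le> 2*r+x" "0 \<le> 2*r+y" "0 \<le> 2*r+z" using bx by auto
    thus ?thesis by (metis mult_nonneg_nonneg h)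
  qed
  moreover have "(2*r+x)*(2*r+y)*(2*r+z) = - a3 - 2*Q*a1 + 2*r*a2 + 2*Q*r"
    unfolding e1 e2 e3 Qr by (simp add: algebra_simps power2_eq_square power3_eq_cube)
  ultimately have D: "- 2 * Q * a1 - 2 * r * a2 - 2 * Q * r \<le> a3 \<and>
      a3 \<le> - 2 * Q * a1 + 2 * r * a2 + 2 * Q * r" by linarith
  show ?thesis using A Bs Bb C D unfolding M_def X_def by linarith
qed

lemma CUB_bwd:
  fixes a1 a2 a3 Q r :: real
  assumes Qr: "Q = r^2" and r: "r > 0"
  and H: "\<bar>a1\<bar> \<le> 6 * r \<and>
      4 * r * \<bar>a1\<bar> - 9 * Q \<le> a2 \<and>
      a2 \<le> (1/3) * a1 ^ 2 + 3 * Q \<and>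
      - (2/27) * a1 ^ 3 + (1/3) * a1 * a2 + Q * a1
        - (2/27) * (a1 ^ 2 - 3 * a2 + 9 * Q) powr (3/2) \<le> a3 \<and>
      a3 \<le> - (2/27) * a1 ^ 3 + (1/3) * a1 * a2 + Q * a1
        + (2/27) * (a1 ^ 2 - 3 * a2 + 9 * Q) powr (3/2) \<and>
      - 2 * Q * a1 - 2 * r * a2 - 2 * Q * r \<le> a3 \<and>
      a3 \<le> - 2 * Q * a1 + 2 * r * a2 + 2 * Q * r"
  shows "\<exists>x y z. \<bar>x\<bar> \<le> 2*r \<and> \<bar>y\<bar> \<le> 2*r \<and> \<bar>z\<bar> \<le> 2*r \<and>
     a1 = -(x+y+z) \<and> a2 = 3*Q + (x*y+x*z+y*z) \<and> a3 = -(x*y*z) - 2*Q*(x+y+z)"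
proof -
  define X where "X = a1 ^ 2 - 3 * a2 + 9 * Q"
  define M where "M = - (2/27) * a1 ^ 3 + (1/3) * a1 * a2 + Q * a1"
  define A where "A = a1"
  define B where "B = a2 - 3 * Q"
  define C where "C = a3 - 2 * Q * a1"
  define g where "g = (\<lambda>y::real. y^3 + A*y^2 + B*y + C)"
  have X0: "X \<ge> 0" using H unfolding X_def by linarith
  define D where "D = sqrt X"
  have D0: "D \<ge> 0" and DD: "D * D = X" using X0 by (auto simp: D_def)
  have Cc: "\<bar>a3 - M\<bar> \<le> (2/27) * D ^ 3"
    using H p32[OF X0] unfolding M_def X_def D_def by (simp only: abs_le_iff) linarith
  define c1 where "c1 = (-A - D)/3"
  define c2 where "c2 = (-A + D)/3"
  have c12: "c1 \<le> c2" using D0 by (simp add: c1_def c2_def)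
  have a2e: "a2 = (a1^2 - D*D + 9*Q)/3" using DD unfolding X_def by simp
  have gc1: "27 * g c1 = 27 * (a3 - M) + 2 * D^3"
    unfolding g_def c1_def M_def A_def B_def C_def a2e
    by (simp add: field_simps power2_eq_square power3_eq_cube)
  have gc2: "27 * g c2 = 27 * (a3 - M) - 2 * D^3"
    unfolding g_def c2_def M_def A_def B_def C_def a2e
    by (simp add: field_simps power2_eq_square power3_eq_cube)
  define Qv where "Qv = a3 - M"
  have gc1': "27 * g c1 = 27 * Qv + 2 * D^3" and gc2': "27 * g c2 = 27 * Qv - 2 * D^3"
    and Cc': "\<bar>Qv\<bar> \<le> (2/27) * D ^ 3" using gc1 gc2 Cc by (simp_all add: Qv_def)
  have gc1p: "g c1 \<ge> 0" using gc1' Cc' by (simp only: abs_le_iff) linarith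
  have gc2n: "g c2 \<le> 0" using gc2' Cc' by (simp only: abs_le_iff) linarith
  have "X \<le> (6*r - \<bar>a1\<bar>)^2"
  proof -
    have "(6*r - \<bar>a1\<bar>)^2 = 36*r^2 - 12*r*\<bar>a1\<bar> + a1^2"
      by (simp add: power2_eq_square algebra_simps)
    thus ?thesis using H unfolding X_def Qr by linarith
  qed
  hence "D \<le> 6*r - \<bar>a1\<bar>" unfolding D_def using H
    by (metis abs_of_nonneg diff_ge_0_iff_ge real_sqrt_abs real_sqrt_le_mono)
  hence c1b: "-2*r \<le> c1" and c2b: "c2 \<le> 2*r"
    unfolding c1_def c2_def A_def by (auto simp: abs_if split: if_splits)
  have gm: "g (-2*r) = a3 + 2*Q*a1 - 2*r*a2 - 2*Q*r"
    unfolding g_def A_def B_def C_def Qr by (simp add: algebra_simps power2_eq_square power3_eq_cube)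
  have gp: "g (2*r) = a3 + 2*Q*a1 + 2*r*a2 + 2*Q*r"
    unfolding g_def A_def B_def C_def Qr by (simp add: algebra_simps power2_eq_square power3_eq_cube)
  have gmn: "g (-2*r) \<le> 0" using gm H by linarith
  have gpp: "g (2*r) \<ge> 0" using gp H by linarith
  have cont: "continuous_on S g" for S unfolding g_def by (intro continuous_intros)
  obtain r1 where r1: "-2*r \<le> r1" "r1 \<le> c1" "g r1 = 0"
    using IVT'[of g "-2*r" 0 c1, OF gmn gc1p c1b cont] by blast
  obtain r3 where r3: "c2 \<le> r3" "r3 \<le> 2*r" "g r3 = 0"
    using IVT'[of g c2 0 "2*r", OF gc2n gpp c2b cont] by blast
  have gd: "3*(y-c1)*(y-c2) = 3*y^2 + 2*A*y + B" for y
  proof -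
    have "9*(y-c1)*(y-c2) = (3*y+A)^2 - D*D"
      unfolding c1_def c2_def by (simp add: field_simps power2_eq_square)
    also have "\<dots> = 9*y^2 + 6*A*y + 3*B"
      unfolding DD X_def A_def B_def by (simp add: algebra_simps power2_eq_square)
    finally have "3 * (3*(y-c1)*(y-c2)) = 3 * (3*y^2 + 2*A*y + B)" by (simp add: algebra_simps)
    thus ?thesis by simp
  qed
  show ?thesis
  proof (cases "r1 = r3")
    case True
    hence cc: "c1 = r1" "c2 = r1" using r1 r3 c12 by auto
    hence "D = 0" unfolding c1_def c2_def by simp
    hence "X = 0" using DD by simp
    have Ae: "A = -3*r1" using cc \<open>D = 0\<close> unfolding c1_def by simp
    have Be: "B = 3*r1^2" using \<open>X = 0\<close> Ae unfolding X_def A_def B_def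
      by (simp add: power2_eq_square algebra_simps)
    have Ce: "C = -(r1^3)" using r1(3) Ae Be unfolding g_def
      by (simp add: power2_eq_square power3_eq_cube algebra_simps)
    show ?thesis
      apply (rule exI[of _ r1], rule exI[of _ r1], rule exI[of _ r1])
      using r1 r3 True Ae Be Ce c12 unfolding A_def B_def C_def
      by (auto simp: power2_eq_square power3_eq_cube algebra_simps abs_le_iff)
  next
    case False
    hence lt: "r1 < r3" using r1 r3 c12 by auto
    define r2 where "r2 = -A - r1 - r3"
    have "g r1 - g r3 = (r1 - r3) * (r1^2 + r1*r3 + r3^2 + A*(r1+r3) + B)"
      unfolding g_def by (simp add: algebra_simps power2_eq_square power3_eq_cube)
    hence F: "r1^2 + r1*r3 + r3^2 + A*(r1+r3) + B = 0" using r1 r3 lt by simp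
    have "r1*r2 + r1*r3 + r2*r3 - B = -(r1^2 + r1*r3 + r3^2 + A*(r1+r3) + B)"
      unfolding r2_def by (simp add: algebra_simps power2_eq_square)
    hence e2: "B = r1*r2 + r1*r3 + r2*r3" using F by linarith
    have Ae: "A = -(r1+r2+r3)" unfolding r2_def by simp
    have "g r1 = r1*r2*r3 + C" unfolding g_def Ae e2
      by (simp add: algebra_simps power2_eq_square power3_eq_cube)
    hence e3: "C = -(r1*r2*r3)" using r1 by simp
    have gd2: "3*y^2 + 2*A*y + B = (y-r1)*(y-r2) + (y-r1)*(y-r3) + (y-r2)*(y-r3)" for y
      unfolding Ae e2 by (simp add: algebra_simps power2_eq_square)
    have up: "r2 \<le> 2*r"
    proof (rule ccontr)
      assume "\<not> r2 \<le> 2*r"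
      hence "(r3-r1)*(r3-r2) < 0" using lt r3 by (intro mult_pos_neg) auto
      moreover have "3*(r3-c1)*(r3-c2) \<ge> 0" using r3 c12 by (intro mult_nonneg_nonneg) auto
      ultimately show False using gd[of r3] gd2[of r3] by simp
    qed
    have lo: "-2*r \<le> r2"
    proof (rule ccontr)
      assume "\<not> -2*r \<le> r2"
      hence "(r1-r2)*(r1-r3) < 0" using lt r1 by (intro mult_pos_neg) auto
      moreover have "3*(r1-c1)*(r1-c2) \<ge> 0"
      proof -
        have "(r1-c1)*(r1-c2) \<ge> 0" using r1 c12 by (intro mult_nonpos_nonpos) auto
        thus ?thesis by (simp only: mult.assoc)
      qed
      ultimately show False using gd[of r1] gd2[of r1] by simp
    qed
    show ?thesis
      apply (rule exI[of _ r1], rule exI[of _ r2], rule exI[of _ r3])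
      using r1 r3 up lo c12 e2 e3 Ae unfolding A_def B_def C_def
      by (auto simp: algebra_simps abs_le_iff)
  qed
qed



definition PP :: "real \<Rightarrow> real \<Rightarrow> real poly" where "PP Q t = [:Q, -t, 1:]"

lemma prod_nth_list: "(\<Prod>i<length xs. f (xs ! i)) = prod_list (map f (xs :: 'a list)) "
  by (induction xs) (simp_all add: prod.lessThan_Suc_shift del: prod.lessThan_Suc)

lemma WGL: assumes "ts \<noteq> []" "\<forall>t\<in>set ts. \<bar>t\<bar> \<le> 2 * sqrt (real q)"
  "map_poly real_of_int P = prod_list (map (PP (real q)) ts)"
  shows "weil_poly q (length ts) P"
  unfolding WG
proof (intro conjI exI[of _ "\<lambda>i. ts ! i"])
  show "0 < length ts" using assms by simp
  show "\<forall>i<length ts. \<bar>ts ! i\<bar> \<le> 2 * sqrt (real q)" using assms(2) by auto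
  show "map_poly real_of_int P = (\<Prod>i<length ts. [:real q, - ts ! i, 1:])"
    using prod_nth_list[of "PP (real q)" ts] assms(3) by (simp add: PP_def)
qed

lemma WG1: "weil_poly q 1 P \<Longrightarrow> \<exists>t. \<bar>t\<bar> \<le> 2 * sqrt (real q) \<and> map_poly real_of_int P = PP (real q) t"
  unfolding WG PP_def by auto

lemma WG2: "weil_poly q 2 P \<Longrightarrow> \<exists>t u. \<bar>t\<bar> \<le> 2 * sqrt (real q) \<and> \<bar>u\<bar> \<le> 2 * sqrt (real q)
   \<and> map_poly real_of_int P = PP (real q) t * PP (real q) u"
  unfolding WG PP_def by (auto simp: numeral_2_eq_2 lessThan_Suc)

lemma prod3: "PP Q x * PP Q y * PP Q z = [: Q^3, -(Q^2*(x+y+z)), Q*(3*Q + (x*y+x*z+y*z)),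
   -(x*y*z) - 2*Q*(x+y+z), 3*Q + (x*y+x*z+y*z), -(x+y+z), 1:]"
  by (simp add: PP_def algebra_simps power2_eq_square power3_eq_cube)

lemma mh: "map_poly real_of_int [: int q ^ 3, a1 * int q ^ 2, a2 * int q, a3, a2, a1, 1 :]
   = [: real q ^ 3, real_of_int a1 * real q ^ 2, real_of_int a2 * real q, real_of_int a3,
        real_of_int a2, real_of_int a1, 1:]"
  by (simp add: mapi_pCons)

lemma HP: assumes "h = [: int q ^ 3, a1 * int q ^ 2, a2 * int q, a3, a2, a1, 1 :]"
  "real_of_int a1 = -(x+y+z)" "real_of_int a2 = 3*real q + (x*y+x*z+y*z)"
  "real_of_int a3 = -(x*y*z) - 2*real q*(x+y+z)"
  shows "map_poly real_of_int h = PP (real q) x * PP (real q) y * PP (real q) z"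
  unfolding assms(1) mh prod3 assms(2-4) by (simp add: algebra_simps power2_eq_square power3_eq_cube)

lemma W3: assumes "h = [: int q ^ 3, a1 * int q ^ 2, a2 * int q, a3, a2, a1, 1 :]"
  shows "weil_poly q 3 h \<longleftrightarrow> (\<exists>x y z. \<bar>x\<bar> \<le> 2*sqrt (real q) \<and> \<bar>y\<bar> \<le> 2*sqrt (real q) \<and> \<bar>z\<bar> \<le> 2*sqrt (real q) \<and>
     real_of_int a1 = -(x+y+z) \<and> real_of_int a2 = 3*real q + (x*y+x*z+y*z) \<and>
     real_of_int a3 = -(x*y*z) - 2*real q*(x+y+z))"
proof
  assume "weil_poly q 3 h"
  then obtain t where tb: "\<forall>i<(3::nat). \<bar>t i\<bar> \<le> 2 * sqrt (real q)"
    and e: "map_poly real_of_int h = (\<Prod>i<(3::nat). [:real q, - t i, 1:])" unfolding WG by blast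
  have "map_poly real_of_int h = PP (real q) (t 0) * PP (real q) (t 1) * PP (real q) (t 2)"
    using e unfolding PP_def
    by (simp only: numeral_3_eq_3 prod.lessThan_Suc lessThan_0 prod.empty mult_1_left numeral_2_eq_2 One_nat_def)
  hence "[: real q ^ 3, real_of_int a1 * real q ^ 2, real_of_int a2 * real q, real_of_int a3,
        real_of_int a2, real_of_int a1, 1:] = [: real q^3, -(real q^2*(t 0+t 1+t 2)),
         real q*(3*real q + (t 0*t 1+t 0*t 2+t 1*t 2)),
   -(t 0*t 1*t 2) - 2*real q*(t 0+t 1+t 2), 3*real q + (t 0*t 1+t 0*t 2+t 1*t 2), -(t 0+t 1+t 2), 1:]"
    unfolding assms mh prod3 .
  hence "real_of_int a1 = -(t 0+t 1+t 2) \<and> real_of_int a2 = 3*real q + (t 0*t 1+t 0*t 2+t 1*t 2) \<and>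
     real_of_int a3 = -(t 0*t 1*t 2) - 2*real q*(t 0+t 1+t 2)" by simp
  moreover have "\<bar>t 0\<bar> \<le> 2*sqrt (real q)" "\<bar>t 1\<bar> \<le> 2*sqrt (real q)" "\<bar>t 2\<bar> \<le> 2*sqrt (real q)"
    using tb by auto
  ultimately show "\<exists>x y z. \<bar>x\<bar> \<le> 2*sqrt (real q) \<and> \<bar>y\<bar> \<le> 2*sqrt (real q) \<and> \<bar>z\<bar> \<le> 2*sqrt (real q) \<and>
     real_of_int a1 = -(x+y+z) \<and> real_of_int a2 = 3*real q + (x*y+x*z+y*z) \<and>
     real_of_int a3 = -(x*y*z) - 2*real q*(x+y+z)" by blast
next
  assume "\<exists>x y z. \<bar>x\<bar> \<le> 2*sqrt (real q) \<and> \<bar>y\<bar> \<le> 2*sqrt (real q) \<and> \<bar>z\<bar> \<le> 2*sqrt (real q) \<and>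
     real_of_int a1 = -(x+y+z) \<and> real_of_int a2 = 3*real q + (x*y+x*z+y*z) \<and>
     real_of_int a3 = -(x*y*z) - 2*real q*(x+y+z)"
  then obtain x y z where b: "\<bar>x\<bar> \<le> 2*sqrt (real q)" "\<bar>y\<bar> \<le> 2*sqrt (real q)" "\<bar>z\<bar> \<le> 2*sqrt (real q)"
    and r: "real_of_int a1 = -(x+y+z)" "real_of_int a2 = 3*real q + (x*y+x*z+y*z)"
     "real_of_int a3 = -(x*y*z) - 2*real q*(x+y+z)" by blast
  have "map_poly real_of_int h = prod_list (map (PP (real q)) [x,y,z])"
    using HP[OF assms r] by (simp add: mult_ac)
  from WGL[OF _ _ this] b show "weil_poly q 3 h" by (simp add: numeral_3_eq_3)
qed

lemma PR: assumes "Q = r^2" "r > 0" "\<bar>t\<bar> \<le> 2*r"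
  shows "(\<exists>u. poly (PP Q t) u = 0) \<longleftrightarrow> \<bar>t\<bar> = 2*r"
proof
  assume "\<exists>u. poly (PP Q t) u = 0"
  then obtain u where "u^2 - t*u + Q = 0" by (auto simp: PP_def algebra_simps power2_eq_square)
  hence "(u - t/2)^2 + (Q - t^2/4) = 0" by (simp add: algebra_simps power2_eq_square)
  hence "t^2/4 \<ge> Q" by (smt (verit) zero_le_power2)
  hence "t^2 \<ge> (2*r)^2" using assms by (simp add: power_mult_distrib)
  hence "\<bar>t\<bar> \<ge> 2*r" using assms(2) by (metis abs_le_square_iff abs_of_pos mult_pos_pos zero_less_numeral)
  thus "\<bar>t\<bar> = 2*r" using assms by linarith
next
  assume a: "\<bar>t\<bar> = 2*r"
  show "\<exists>u. poly (PP Q t) u = 0"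
  proof (intro exI)
    show "poly (PP Q (t)) (t/2) = 0"
    proof -
      have "t^2 = 4*Q" using a assms by (metis power2_abs power_mult_distrib power2_eq_square
          mult_numeral_1 numeral_times_numeral semiring_norm(12,13))
      thus ?thesis by (simp add: PP_def power2_eq_square field_simps)
    qed
  qed
qed

lemma PRint: assumes "Q = r^2" "r > 0" "\<bar>t\<bar> < 2*r" shows "poly (PP Q t) u \<noteq> 0"
  using PR[OF assms(1,2) less_imp_le[OF assms(3)]] assms(3) by auto

lemma RR:
  fixes a1 a2 a3 Q r x y z :: real
  assumes Qr: "Q = r^2" and r: "r > 0"
    and b: "\<bar>x\<bar> \<le> 2*r" "\<bar>y\<bar> \<le> 2*r" "\<bar>z\<bar> \<le> 2*r"
    and e1: "a1 = -(x+y+z)" and e2: "a2 = 3*Q + (x*y+x*z+y*z)" and e3: "a3 = -(x*y*z) - 2*Q*(x+y+z)"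
  shows "(\<bar>x\<bar> = 2*r \<or> \<bar>y\<bar> = 2*r \<or> \<bar>z\<bar> = 2*r) \<longleftrightarrow>
     (\<bar>a1\<bar> = 6 * r \<or> 4 * r * \<bar>a1\<bar> - 9 * Q = a2 \<or>
      - 2 * Q * a1 - 2 * r * a2 - 2 * Q * r = a3 \<or> a3 = - 2 * Q * a1 + 2 * r * a2 + 2 * Q * r)"
proof -
  have bx: "-2*r \<le> x" "x \<le> 2*r" "-2*r \<le> y" "y \<le> 2*r" "-2*r \<le> z" "z \<le> 2*r"
    using b by (auto simp: abs_le_iff)
  have d1: "(2*r-x)*(2*r-y)*(2*r-z) = a3 + 2*Q*a1 + 2*r*a2 + 2*Q*r"
    unfolding e1 e2 e3 Qr by (simp add: algebra_simps power2_eq_square power3_eq_cube)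
  have d2: "(2*r+x)*(2*r+y)*(2*r+z) = - a3 - 2*Q*a1 + 2*r*a2 + 2*Q*r"
    unfolding e1 e2 e3 Qr by (simp add: algebra_simps power2_eq_square power3_eq_cube)
  have D: "(- 2 * Q * a1 - 2 * r * a2 - 2 * Q * r = a3 \<or> a3 = - 2 * Q * a1 + 2 * r * a2 + 2 * Q * r)
     \<longleftrightarrow> (\<bar>x\<bar> = 2*r \<or> \<bar>y\<bar> = 2*r \<or> \<bar>z\<bar> = 2*r)"
  proof -
    have "(- 2 * Q * a1 - 2 * r * a2 - 2 * Q * r = a3) \<longleftrightarrow> (2*r-x)*(2*r-y)*(2*r-z) = 0"
      using d1 by linarith
    moreover have "(a3 = - 2 * Q * a1 + 2 * r * a2 + 2 * Q * r) \<longleftrightarrow> (2*r+x)*(2*r+y)*(2*r+z) = 0"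
      using d2 by linarith
    ultimately show ?thesis using r by (auto simp: abs_if)
  qed
  have A: "\<bar>a1\<bar> = 6 * r \<Longrightarrow> \<bar>x\<bar> = 2*r" using bx unfolding e1 by (auto simp: abs_if split: if_splits)
  have Bs: "\<bar>x\<bar> = 2*r \<or> \<bar>y\<bar> = 2*r \<or> \<bar>z\<bar> = 2*r" if eq: "4 * r * \<bar>a1\<bar> - 9 * Q = a2"
  proof (cases "a1 \<le> 0")
    case True
    have n: "0 \<le> (2*r-x)*(2*r-y)" "0 \<le> (2*r-x)*(2*r-z)" "0 \<le> (2*r-y)*(2*r-z)"
      using bx by (auto intro!: mult_nonneg_nonneg)
    moreover have "(2*r-x)*(2*r-y) + (2*r-x)*(2*r-z) + (2*r-y)*(2*r-z)
       = 12*r^2 - 4*r*\<bar>a1\<bar> + (x*y+x*z+y*z)"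
      using True by (simp add: e1 abs_of_nonpos algebra_simps power2_eq_square)
    ultimately have "(2*r-x)*(2*r-y) = 0" using eq e2 Qr by linarith
    thus ?thesis using r by auto
  next
    case False
    have h: "0 \<le> 2*r+x" "0 \<le> 2*r+y" "0 \<le> 2*r+z" using bx by auto
    have n: "0 \<le> (2*r+x)*(2*r+y)" "0 \<le> (2*r+x)*(2*r+z)" "0 \<le> (2*r+y)*(2*r+z)"
      using h by (metis mult_nonneg_nonneg)+
    moreover have "(2*r+x)*(2*r+y) + (2*r+x)*(2*r+z) + (2*r+y)*(2*r+z)
       = 12*r^2 - 4*r*\<bar>a1\<bar> + (x*y+x*z+y*z)"
      using False by (simp add: e1 algebra_simps power2_eq_square)
    ultimately have "(2*r+x)*(2*r+y) = 0" using eq e2 Qr by linarith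
    thus ?thesis using r by auto
  qed
  show ?thesis using D A Bs by blast
qed

lemma sqrt_nonsquare:
  fixes q :: nat and m k :: int
  assumes "\<not> (\<exists>s::nat. q = s ^ 2)" "sqrt (real q) * real_of_int m + real_of_int k = 0"
  shows "m = 0"
proof (rule ccontr)
  assume m: "m \<noteq> 0"
  hence "sqrt (real q) = - real_of_int k / real_of_int m" using assms(2) by (simp add: field_simps)
  hence "sqrt (real q) \<in> \<rat>" by simp
  then obtain a b :: nat where b: "b \<noteq> 0" and ab: "\<bar>sqrt (real q)\<bar> = real a / real b" and cop: "coprime a b"
    by (rule Rats_abs_nat_div_natE)
  have "sqrt (real q) * real b = real a" using ab b by (simp add: field_simps)
  hence "real q * real b ^ 2 = real a ^ 2"
    by (metis of_nat_0_le_iff power_mult_distrib real_sqrt_pow2)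
  hence qa: "q * b^2 = a^2" by (metis of_nat_eq_iff of_nat_mult of_nat_power)
  hence "b^2 dvd a^2" by (metis dvd_triv_right)
  moreover have "coprime (b^2) (a^2)" using cop by (simp add: coprime_commute)
  ultimately have "is_unit (b^2)" by (metis coprime_common_divisor dvd_refl)
  hence "b = 1" by simp
  thus False using qa assms(1) by auto
qed

definition rhs :: "nat \<Rightarrow> int poly \<Rightarrow> bool" where
 "rhs q h \<longleftrightarrow> (\<exists>k l :: nat.
        ((\<not> (\<exists>s::nat. q = s ^ 2)) \<and>
           (\<exists>h0. weil_poly q 1 h0 \<and> h = [: - int q, 0, 1 :] ^ 2 * h0))
        \<or> (\<exists>s::nat. q = s ^ 2 \<and> k + l = 3 \<and>
             h = [: int s, 1 :] ^ (2 * k) * [: - int s, 1 :] ^ (2 * l))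
        \<or> (\<exists>s::nat. q = s ^ 2 \<and> k + l = 2 \<and>
             (\<exists>h0. weil_poly q 1 h0 \<and> \<not> has_real_root h0 \<and>
               h = [: int s, 1 :] ^ (2 * k) * [: - int s, 1 :] ^ (2 * l) * h0))
        \<or> (\<exists>s::nat. q = s ^ 2 \<and> k + l = 1 \<and>
             (\<exists>h0. weil_poly q 2 h0 \<and> \<not> has_real_root h0 \<and>
               h = [: int s, 1 :] ^ (2 * k) * [: - int s, 1 :] ^ (2 * l) * h0)))"

lemma Fk: assumes "q = s^2"
  shows "map_poly real_of_int ([: int s, 1 :] ^ (2 * k) * [: - int s, 1 :] ^ (2 * l))
     = PP (real q) (-2 * real s) ^ k * PP (real q) (2 * real s) ^ l"
proof -
  have 1: "map_poly real_of_int [: int s, 1 :] ^ 2 = PP (real q) (-2 * real s)"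
    using assms by (simp add: mapi_pCons PP_def power2_eq_square)
  have 2: "map_poly real_of_int [: - int s, 1 :] ^ 2 = PP (real q) (2 * real s)"
    using assms by (simp add: mapi_pCons PP_def power2_eq_square)
  show ?thesis by (simp add: mapi_mult mapi_power power_mult 1 2)
qed

lemma SC: "x = 2 * real s \<or> x = -2 * real s \<Longrightarrow>
   \<exists>k l. k + l = (1::nat) \<and> PP Q x = PP Q (-2 * real s) ^ k * PP Q (2 * real s) ^ l"
  by (metis add.commute add_0 mult_1 mult_1_right power_0 power_one_right)

lemma comb: "A = PP Q (-2 * real s) ^ k1 * PP Q (2 * real s) ^ l1 \<Longrightarrow>
   B = PP Q (-2 * real s) ^ k2 * PP Q (2 * real s) ^ l2 \<Longrightarrow>
   A * B = PP Q (-2 * real s) ^ (k1+k2) * PP Q (2 * real s) ^ (l1+l2)"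
  by (simp add: power_add mult_ac)

lemma bint: "x = 2 * real s \<or> x = -2 * real s \<Longrightarrow> \<exists>xi::int. real_of_int xi = x"
  by (metis of_int_minus of_int_mult of_int_numeral of_int_of_nat_eq)

lemma M1: assumes hq: "h = [: int q ^ 3, a1 * int q ^ 2, a2 * int q, a3, a2, a1, 1 :]"
  and qs: "q = s^2" and s: "s > 0"
  and e1: "real_of_int a1 = -(x+y+z)" and e2: "real_of_int a2 = 3*real q + (x*y+x*z+y*z)"
  and e3: "real_of_int a3 = -(x*y*z) - 2*real q*(x+y+z)"
  and bx: "x = 2 * real s \<or> x = -2 * real s" and hy: "\<bar>y\<bar> < 2 * real s" and bz: "\<bar>z\<bar> < 2 * real s"
  shows "rhs q h"
proof -
  have sq: "sqrt (real q) = real s" and Qs: "real q = real s ^ 2" and s0: "real s > 0"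
    using qs s by auto
  obtain xi where xi: "real_of_int xi = x" using bint[OF bx] by blast
  define b where "b = a1 + xi"
  define d where "d = a2 - 3*int q + xi * (a1 + xi)"
  define h0 where "h0 = [: int q^2, int q * b, 2*int q + d, b, 1:]"
  have yz1: "real_of_int b = -(y+z)" using e1 xi by (simp add: b_def)
  have yz2: "real_of_int d = y*z" by (simp add: d_def e1 e2 xi algebra_simps)
  have mh0: "map_poly real_of_int h0 = PP (real q) y * PP (real q) z"
    unfolding h0_def PP_def by (simp add: mapi_pCons yz1 yz2 algebra_simps power2_eq_square)
  have w0: "weil_poly q 2 h0" using WGL[of "[y,z]" q h0] mh0 sq hy bz by (simp add: numeral_2_eq_2)
  have nr: "\<not> has_real_root h0"
    unfolding has_real_root_def mh0 using PRint[OF Qs s0 hy] PRint[OF Qs s0 bz] by simp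
  obtain k l where kl: "k + l = 1" "PP (real q) x = PP (real q) (-2 * real s) ^ k * PP (real q) (2 * real s) ^ l"
    using SC[OF bx] by blast
  have "map_poly real_of_int h = map_poly real_of_int ([: int s, 1 :] ^ (2 * k) * [: - int s, 1 :] ^ (2 * l) * h0)"
    unfolding HP[OF hq e1 e2 e3] mapi_mult[of _ h0] Fk[OF qs] mh0 kl(2) by (simp add: mult_ac)
  hence "h = [: int s, 1 :] ^ (2 * k) * [: - int s, 1 :] ^ (2 * l) * h0" by (rule mapi_inj)
  thus ?thesis unfolding rhs_def using kl(1) w0 nr qs by blast
qed

lemma M2: assumes hq: "h = [: int q ^ 3, a1 * int q ^ 2, a2 * int q, a3, a2, a1, 1 :]"
  and qs: "q = s^2" and s: "s > 0"
  and e1: "real_of_int a1 = -(x+y+z)" and e2: "real_of_int a2 = 3*real q + (x*y+x*z+y*z)"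
  and e3: "real_of_int a3 = -(x*y*z) - 2*real q*(x+y+z)"
  and bx: "x = 2 * real s \<or> x = -2 * real s" and hy: "y = 2 * real s \<or> y = -2 * real s"
  and bz: "\<bar>z\<bar> < 2 * real s"
  shows "rhs q h"
proof -
  have sq: "sqrt (real q) = real s" and Qs: "real q = real s ^ 2" and s0: "real s > 0"
    using qs s by auto
  obtain xi where xi: "real_of_int xi = x" using bint[OF bx] by blast
  obtain yi where yi: "real_of_int yi = y" using bint[OF hy] by blast
  define h0 where "h0 = [: int q, a1 + xi + yi, 1:]"
  have mh0: "map_poly real_of_int h0 = PP (real q) z"
    unfolding h0_def PP_def using e1 xi yi by (simp add: mapi_pCons)
  have w0: "weil_poly q 1 h0" using WGL[of "[z]" q h0] mh0 sq bz by simp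
  have nr: "\<not> has_real_root h0"
    unfolding has_real_root_def mh0 using PRint[OF Qs s0 bz] by simp
  obtain k1 l1 where kl1: "k1 + l1 = 1" "PP (real q) x = PP (real q) (-2 * real s) ^ k1 * PP (real q) (2 * real s) ^ l1"
    using SC[OF bx] by blast
  obtain k2 l2 where kl2: "k2 + l2 = 1" "PP (real q) y = PP (real q) (-2 * real s) ^ k2 * PP (real q) (2 * real s) ^ l2"
    using SC[OF hy] by blast
  have "map_poly real_of_int h = map_poly real_of_int ([: int s, 1 :] ^ (2 * (k1+k2)) * [: - int s, 1 :] ^ (2 * (l1+l2)) * h0)"
    unfolding HP[OF hq e1 e2 e3] mapi_mult[of _ h0] Fk[OF qs] mh0 comb[OF kl1(2) kl2(2)] ..
  hence "h = [: int s, 1 :] ^ (2 * (k1+k2)) * [: - int s, 1 :] ^ (2 * (l1+l2)) * h0" by (rule mapi_inj)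
  moreover have "k1 + k2 + (l1 + l2) = 2" using kl1 kl2 by simp
  ultimately show ?thesis unfolding rhs_def using w0 nr qs by blast
qed

lemma M3: assumes hq: "h = [: int q ^ 3, a1 * int q ^ 2, a2 * int q, a3, a2, a1, 1 :]"
  and qs: "q = s^2" and s: "s > 0"
  and e1: "real_of_int a1 = -(x+y+z)" and e2: "real_of_int a2 = 3*real q + (x*y+x*z+y*z)"
  and e3: "real_of_int a3 = -(x*y*z) - 2*real q*(x+y+z)"
  and bx: "x = 2 * real s \<or> x = -2 * real s" and hy: "y = 2 * real s \<or> y = -2 * real s"
  and bz: "z = 2 * real s \<or> z = -2 * real s"
  shows "rhs q h"
proof -
  obtain k1 l1 where kl1: "k1 + l1 = 1" "PP (real q) x = PP (real q) (-2 * real s) ^ k1 * PP (real q) (2 * real s) ^ l1"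
    using SC[OF bx] by blast
  obtain k2 l2 where kl2: "k2 + l2 = 1" "PP (real q) y = PP (real q) (-2 * real s) ^ k2 * PP (real q) (2 * real s) ^ l2"
    using SC[OF hy] by blast
  obtain k3 l3 where kl3: "k3 + l3 = 1" "PP (real q) z = PP (real q) (-2 * real s) ^ k3 * PP (real q) (2 * real s) ^ l3"
    using SC[OF bz] by blast
  have "map_poly real_of_int h = map_poly real_of_int ([: int s, 1 :] ^ (2 * (k1+k2+k3)) * [: - int s, 1 :] ^ (2 * (l1+l2+l3)))"
    unfolding HP[OF hq e1 e2 e3] Fk[OF qs] comb[OF comb[OF kl1(2) kl2(2)] kl3(2)] ..
  hence "h = [: int s, 1 :] ^ (2 * (k1+k2+k3)) * [: - int s, 1 :] ^ (2 * (l1+l2+l3))" by (rule mapi_inj)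
  moreover have "k1 + k2 + k3 + (l1 + l2 + l3) = 3" using kl1 kl2 kl3 by simp
  ultimately show ?thesis unfolding rhs_def using qs by blast
qed

lemma P3sq: assumes hq: "h = [: int q ^ 3, a1 * int q ^ 2, a2 * int q, a3, a2, a1, 1 :]"
  and qs: "q = s^2" and s: "s > 0"
  and e1: "real_of_int a1 = -(x+y+z)" and e2: "real_of_int a2 = 3*real q + (x*y+x*z+y*z)"
  and e3: "real_of_int a3 = -(x*y*z) - 2*real q*(x+y+z)"
  and b: "\<bar>x\<bar> \<le> 2 * real s" "\<bar>y\<bar> \<le> 2 * real s" "\<bar>z\<bar> \<le> 2 * real s"
  and rt: "\<bar>x\<bar> = 2 * real s \<or> \<bar>y\<bar> = 2 * real s \<or> \<bar>z\<bar> = 2 * real s"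
  shows "rhs q h"
proof -
  have cls: "(t = 2 * real s \<or> t = -2 * real s) \<or> \<bar>t\<bar> < 2 * real s" if "\<bar>t\<bar> \<le> 2 * real s" for t
    using that by (auto simp: abs_if)
  have p1: "real_of_int a1 = -(y+x+z)" "real_of_int a2 = 3*real q + (y*x+y*z+x*z)"
     "real_of_int a3 = -(y*x*z) - 2*real q*(y+x+z)" using e1 e2 e3 by (simp_all add: algebra_simps)
  have p2: "real_of_int a1 = -(z+x+y)" "real_of_int a2 = 3*real q + (z*x+z*y+x*y)"
     "real_of_int a3 = -(z*x*y) - 2*real q*(z+x+y)" using e1 e2 e3 by (simp_all add: algebra_simps)
  have p3: "real_of_int a1 = -(x+z+y)" "real_of_int a2 = 3*real q + (x*z+x*y+z*y)"
     "real_of_int a3 = -(x*z*y) - 2*real q*(x+z+y)" using e1 e2 e3 by (simp_all add: algebra_simps)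
  have p4: "real_of_int a1 = -(y+z+x)" "real_of_int a2 = 3*real q + (y*z+y*x+z*x)"
     "real_of_int a3 = -(y*z*x) - 2*real q*(y+z+x)" using e1 e2 e3 by (simp_all add: algebra_simps)
  note M1' = M1[OF hq qs s] and M2' = M2[OF hq qs s] and M3' = M3[OF hq qs s]
  from cls[OF b(1)] cls[OF b(2)] cls[OF b(3)] show ?thesis
  proof (elim disjE)
  qed (use rt in \<open>(auto intro: M1'[OF e1 e2 e3] M1'[OF p1] M1'[OF p2] M2'[OF e1 e2 e3] M2'[OF p3] M2'[OF p4]
        M3'[OF e1 e2 e3])\<close>)
qed

lemma BK: assumes qs: "q = s^2" and s: "s > 0" and len: "k + l + length us = 3" and kl: "k + l \<ge> 1"
  and ub: "\<forall>u\<in>set us. \<bar>u\<bar> \<le> 2 * real s"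
  and mh: "map_poly real_of_int h = PP (real q) (-2 * real s) ^ k * PP (real q) (2 * real s) ^ l * prod_list (map (PP (real q)) us)"
  shows "weil_poly q 3 h \<and> has_real_root h"
proof
  define ts where "ts = replicate k (-2 * real s) @ replicate l (2 * real s) @ us"
  have "length ts = 3" using len by (simp add: ts_def)
  moreover have "map_poly real_of_int h = prod_list (map (PP (real q)) ts)"
    unfolding mh ts_def by (simp add: mult_ac)
  moreover have "ts \<noteq> []" using len by (auto simp: ts_def)
  moreover have "\<forall>t\<in>set ts. \<bar>t\<bar> \<le> 2 * sqrt (real q)" using ub qs by (auto simp: ts_def)
  ultimately show "weil_poly q 3 h" using WGL by metis
  have p1: "poly (PP (real q) (-2 * real s)) (- real s) = 0" "poly (PP (real q) (2 * real s)) (real s) = 0"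
    using qs by (simp_all add: PP_def power2_eq_square)
  show "has_real_root h" unfolding has_real_root_def mh
  proof (cases "k = 0")
    case True
    hence "l \<noteq> 0" using kl by simp
    thus "\<exists>x. poly (PP (real q) (-2 * real s) ^ k * PP (real q) (2 * real s) ^ l * prod_list (map (PP (real q)) us)) x = 0"
      using p1 by (intro exI[of _ "real s"]) (simp add: poly_power)
  next
    case False
    thus "\<exists>x. poly (PP (real q) (-2 * real s) ^ k * PP (real q) (2 * real s) ^ l * prod_list (map (PP (real q)) us)) x = 0"
      using p1 by (intro exI[of _ "- real s"]) (simp add: poly_power)
  qed
qed

lemma P3back: assumes q: "q > 0" and R: "rhs q h"
  shows "weil_poly q 3 h \<and> has_real_root h"
proof -
  define r where "r = sqrt (real q)"
  have rr: "r * r = real q" "r > 0" using q by (auto simp: r_def)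
  obtain k l where
    "((\<not> (\<exists>s::nat. q = s ^ 2)) \<and>
           (\<exists>h0. weil_poly q 1 h0 \<and> h = [: - int q, 0, 1 :] ^ 2 * h0))
        \<or> (\<exists>s::nat. q = s ^ 2 \<and> k + l = 3 \<and>
             h = [: int s, 1 :] ^ (2 * k) * [: - int s, 1 :] ^ (2 * l))
        \<or> (\<exists>s::nat. q = s ^ 2 \<and> k + l = 2 \<and>
             (\<exists>h0. weil_poly q 1 h0 \<and> \<not> has_real_root h0 \<and>
               h = [: int s, 1 :] ^ (2 * k) * [: - int s, 1 :] ^ (2 * l) * h0))
        \<or> (\<exists>s::nat. q = s ^ 2 \<and> k + l = 1 \<and>
             (\<exists>h0. weil_poly q 2 h0 \<and> \<not> has_real_root h0 \<and>
               h = [: int s, 1 :] ^ (2 * k) * [: - int s, 1 :] ^ (2 * l) * h0))"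
    using R unfolding rhs_def by blast
  thus ?thesis
  proof (elim disjE exE conjE)
    fix h0 assume w: "weil_poly q 1 h0" and hh: "h = [: - int q, 0, 1 :] ^ 2 * h0"
    obtain t where t: "\<bar>t\<bar> \<le> 2 * sqrt (real q)" "map_poly real_of_int h0 = PP (real q) t"
      using WG1[OF w] by blast
    have m1: "map_poly real_of_int [: - int q, 0, 1 :] ^ 2 = PP (real q) (2*r) * PP (real q) (-2*r)"
      by (simp add: mapi_pCons PP_def power2_eq_square algebra_simps rr(1))
    have mh: "map_poly real_of_int h = prod_list (map (PP (real q)) [2*r, -2*r, t])"
      unfolding hh mapi_mult mapi_power m1 t(2) by (simp add: mult_ac)
    have "weil_poly q (length [2*r, -2*r, t]) h"
      by (rule WGL[OF _ _ mh]) (use t rr in \<open>auto simp: r_def\<close>)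
    moreover have "poly (map_poly real_of_int h) r = 0"
    proof -
      have "poly (PP (real q) (2*r)) r = real q - r * r" by (simp add: PP_def algebra_simps)
      hence "poly (PP (real q) (2*r)) r = 0" using rr(1) by simp
      thus ?thesis unfolding mh by simp
    qed
    ultimately show ?thesis unfolding has_real_root_def by (auto simp: numeral_3_eq_3)
  next
    fix s assume qs: "q = s^2" and kl: "k + l = 3" and hh: "h = [: int s, 1 :] ^ (2 * k) * [: - int s, 1 :] ^ (2 * l)"
    have s: "s > 0" using q qs by (cases s) auto
    show ?thesis
      by (rule BK[OF qs s, of k l "[]"]) (use kl in \<open>simp_all add: hh Fk[OF qs]\<close>)
  next
    fix s h0 assume qs: "q = s^2" and kl: "k + l = 2" and w: "weil_poly q 1 h0"
      and hh: "h = [: int s, 1 :] ^ (2 * k) * [: - int s, 1 :] ^ (2 * l) * h0"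
    have s: "s > 0" using q qs by (cases s) auto
    obtain t where t: "\<bar>t\<bar> \<le> 2 * sqrt (real q)" "map_poly real_of_int h0 = PP (real q) t"
      using WG1[OF w] by blast
    have mh: "map_poly real_of_int h = PP (real q) (-2 * real s) ^ k * PP (real q) (2 * real s) ^ l * prod_list (map (PP (real q)) [t])"
      unfolding hh mapi_mult[of _ h0] Fk[OF qs] t(2) by simp
    have sq: "sqrt (real q) = real s" using qs by simp
    show ?thesis
      by (rule BK[OF qs s _ _ _ mh]) (use kl t sq in auto)
  next
    fix s h0 assume qs: "q = s^2" and kl: "k + l = 1" and w: "weil_poly q 2 h0"
      and hh: "h = [: int s, 1 :] ^ (2 * k) * [: - int s, 1 :] ^ (2 * l) * h0"
    have s: "s > 0" using q qs by (cases s) auto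
    obtain t u where t: "\<bar>t\<bar> \<le> 2 * sqrt (real q)" "\<bar>u\<bar> \<le> 2 * sqrt (real q)"
       "map_poly real_of_int h0 = PP (real q) t * PP (real q) u"
      using WG2[OF w] by blast
    have mh: "map_poly real_of_int h = PP (real q) (-2 * real s) ^ k * PP (real q) (2 * real s) ^ l * prod_list (map (PP (real q)) [t,u])"
      unfolding hh mapi_mult[of _ h0] Fk[OF qs] t(3) by simp
    have sq: "sqrt (real q) = real s" using qs by simp
    show ?thesis
      by (rule BK[OF qs s _ _ _ mh]) (use kl t sq in auto)
  qed
qed


lemma RRd:
  fixes a1 a2 a3 Q r x y z :: real
  assumes Qr: "Q = r^2" and r: "r > 0"
    and b: "\<bar>x\<bar> \<le> 2*r" "\<bar>y\<bar> \<le> 2*r" "\<bar>z\<bar> \<le> 2*r"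
    and e1: "a1 = -(x+y+z)" and e2: "a2 = 3*Q + (x*y+x*z+y*z)" and e3: "a3 = -(x*y*z) - 2*Q*(x+y+z)"
  shows "(- 2 * Q * a1 - 2 * r * a2 - 2 * Q * r = a3 \<or> a3 = - 2 * Q * a1 + 2 * r * a2 + 2 * Q * r)
     \<longleftrightarrow> (\<bar>x\<bar> = 2*r \<or> \<bar>y\<bar> = 2*r \<or> \<bar>z\<bar> = 2*r)"
proof -
  have d1: "(2*r-x)*(2*r-y)*(2*r-z) = a3 + 2*Q*a1 + 2*r*a2 + 2*Q*r"
    unfolding e1 e2 e3 Qr by (simp add: algebra_simps power2_eq_square power3_eq_cube)
  have d2: "(2*r+x)*(2*r+y)*(2*r+z) = - a3 - 2*Q*a1 + 2*r*a2 + 2*Q*r"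
    unfolding e1 e2 e3 Qr by (simp add: algebra_simps power2_eq_square power3_eq_cube)
  have "(- 2 * Q * a1 - 2 * r * a2 - 2 * Q * r = a3) \<longleftrightarrow> (2*r-x)*(2*r-y)*(2*r-z) = 0"
    using d1 by linarith
  moreover have "(a3 = - 2 * Q * a1 + 2 * r * a2 + 2 * Q * r) \<longleftrightarrow> (2*r+x)*(2*r+y)*(2*r+z) = 0"
    using d2 by linarith
  ultimately show ?thesis using r by (auto simp: abs_if)
qed

theorem theoremA:
  fixes p q n :: nat and a1 a2 a3 :: int and h :: "int poly"
  assumes "prime p" and "n > 0" and "q = p ^ n"
    and "h = [: int q ^ 3, a1 * int q ^ 2, a2 * int q, a3, a2, a1, 1 :]"
  shows
   "(weil_poly q 3 h \<longleftrightarrow>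
      \<bar>real_of_int a1\<bar> \<le> 6 * sqrt (real q) \<and>
      4 * sqrt (real q) * \<bar>real_of_int a1\<bar> - 9 * real q \<le> real_of_int a2 \<and>
      real_of_int a2 \<le> (1/3) * real_of_int a1 ^ 2 + 3 * real q \<and>
      - (2/27) * real_of_int a1 ^ 3 + (1/3) * real_of_int a1 * real_of_int a2 + real q * real_of_int a1
        - (2/27) * (real_of_int a1 ^ 2 - 3 * real_of_int a2 + 9 * real q) powr (3/2) \<le> real_of_int a3 \<and>
      real_of_int a3 \<le> - (2/27) * real_of_int a1 ^ 3 + (1/3) * real_of_int a1 * real_of_int a2 + real q * real_of_int a1
        + (2/27) * (real_of_int a1 ^ 2 - 3 * real_of_int a2 + 9 * real q) powr (3/2) \<and>
      - 2 * real q * real_of_int a1 - 2 * sqrt (real q) * real_of_int a2 - 2 * real q * sqrt (real q) \<le> real_of_int a3 \<and>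
      real_of_int a3 \<le> - 2 * real q * real_of_int a1 + 2 * sqrt (real q) * real_of_int a2 + 2 * real q * sqrt (real q))
    \<and>
    (weil_poly q 3 h \<longrightarrow>
      (has_real_root h \<longleftrightarrow>
        \<bar>real_of_int a1\<bar> = 6 * sqrt (real q) \<or>
        4 * sqrt (real q) * \<bar>real_of_int a1\<bar> - 9 * real q = real_of_int a2 \<or>
        - 2 * real q * real_of_int a1 - 2 * sqrt (real q) * real_of_int a2 - 2 * real q * sqrt (real q) = real_of_int a3 \<or>
        real_of_int a3 = - 2 * real q * real_of_int a1 + 2 * sqrt (real q) * real_of_int a2 + 2 * real q * sqrt (real q)))
    \<and>
    (weil_poly q 3 h \<and> has_real_root h \<longleftrightarrow>
      (\<exists>k l :: nat.
        ((\<not> (\<exists>s::nat. q = s ^ 2)) \<and>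
           (\<exists>h0. weil_poly q 1 h0 \<and> h = [: - int q, 0, 1 :] ^ 2 * h0))
        \<or> (\<exists>s::nat. q = s ^ 2 \<and> k + l = 3 \<and>
             h = [: int s, 1 :] ^ (2 * k) * [: - int s, 1 :] ^ (2 * l))
        \<or> (\<exists>s::nat. q = s ^ 2 \<and> k + l = 2 \<and>
             (\<exists>h0. weil_poly q 1 h0 \<and> \<not> has_real_root h0 \<and>
               h = [: int s, 1 :] ^ (2 * k) * [: - int s, 1 :] ^ (2 * l) * h0))
        \<or> (\<exists>s::nat. q = s ^ 2 \<and> k + l = 1 \<and>
             (\<exists>h0. weil_poly q 2 h0 \<and> \<not> has_real_root h0 \<and>
               h = [: int s, 1 :] ^ (2 * k) * [: - int s, 1 :] ^ (2 * l) * h0))))"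
proof -
  have q0: "q > 0" using assms(1,3) by (simp add: prime_gt_0_nat)
  have Qr: "real q = sqrt (real q) ^ 2" by simp
  have r0: "sqrt (real q) > 0" using q0 by simp
  note hq = assms(4)
  have P1: "weil_poly q 3 h \<longleftrightarrow>
      \<bar>real_of_int a1\<bar> \<le> 6 * sqrt (real q) \<and>
      4 * sqrt (real q) * \<bar>real_of_int a1\<bar> - 9 * real q \<le> real_of_int a2 \<and>
      real_of_int a2 \<le> (1/3) * real_of_int a1 ^ 2 + 3 * real q \<and>
      - (2/27) * real_of_int a1 ^ 3 + (1/3) * real_of_int a1 * real_of_int a2 + real q * real_of_int a1
        - (2/27) * (real_of_int a1 ^ 2 - 3 * real_of_int a2 + 9 * real q) powr (3/2) \<le> real_of_int a3 \<and>
      real_of_int a3 \<le> - (2/27) * real_of_int a1 ^ 3 + (1/3) * real_of_int a1 * real_of_int a2 + real q * real_of_int a1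
        + (2/27) * (real_of_int a1 ^ 2 - 3 * real_of_int a2 + 9 * real q) powr (3/2) \<and>
      - 2 * real q * real_of_int a1 - 2 * sqrt (real q) * real_of_int a2 - 2 * real q * sqrt (real q) \<le> real_of_int a3 \<and>
      real_of_int a3 \<le> - 2 * real q * real_of_int a1 + 2 * sqrt (real q) * real_of_int a2 + 2 * real q * sqrt (real q)"
    (is "_ \<longleftrightarrow> ?C")
  proof
    assume "weil_poly q 3 h"
    then obtain x y z where "\<bar>x\<bar> \<le> 2*sqrt (real q)" "\<bar>y\<bar> \<le> 2*sqrt (real q)" "\<bar>z\<bar> \<le> 2*sqrt (real q)"
     "real_of_int a1 = -(x+y+z)" "real_of_int a2 = 3*real q + (x*y+x*z+y*z)"
     "real_of_int a3 = -(x*y*z) - 2*real q*(x+y+z)" unfolding W3[OF hq] by blast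
    from CUB_fwd[OF Qr r0 this] show ?C .
  next
    assume ?C
    from CUB_bwd[OF Qr r0 this] show "weil_poly q 3 h" unfolding W3[OF hq] .
  qed
  have rootchar: "has_real_root h \<longleftrightarrow> (\<bar>x\<bar> = 2*sqrt (real q) \<or> \<bar>y\<bar> = 2*sqrt (real q) \<or> \<bar>z\<bar> = 2*sqrt (real q))"
    if b: "\<bar>x\<bar> \<le> 2*sqrt (real q)" "\<bar>y\<bar> \<le> 2*sqrt (real q)" "\<bar>z\<bar> \<le> 2*sqrt (real q)"
     and e: "real_of_int a1 = -(x+y+z)" "real_of_int a2 = 3*real q + (x*y+x*z+y*z)"
     "real_of_int a3 = -(x*y*z) - 2*real q*(x+y+z)" for x y z
  proof -
    have "has_real_root h \<longleftrightarrow> (\<exists>u. poly (PP (real q) x) u = 0 \<or> poly (PP (real q) y) u = 0 \<or> poly (PP (real q) z) u = 0)"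
      unfolding has_real_root_def HP[OF hq e] by simp
    also have "\<dots> \<longleftrightarrow> (\<exists>u. poly (PP (real q) x) u = 0) \<or> (\<exists>u. poly (PP (real q) y) u = 0) \<or> (\<exists>u. poly (PP (real q) z) u = 0)"
      by blast
    finally show ?thesis using PR[OF Qr r0 b(1)] PR[OF Qr r0 b(2)] PR[OF Qr r0 b(3)] by simp
  qed
  have P2: "weil_poly q 3 h \<longrightarrow>
      (has_real_root h \<longleftrightarrow>
        \<bar>real_of_int a1\<bar> = 6 * sqrt (real q) \<or>
        4 * sqrt (real q) * \<bar>real_of_int a1\<bar> - 9 * real q = real_of_int a2 \<or>
        - 2 * real q * real_of_int a1 - 2 * sqrt (real q) * real_of_int a2 - 2 * real q * sqrt (real q) = real_of_int a3 \<or>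
        real_of_int a3 = - 2 * real q * real_of_int a1 + 2 * sqrt (real q) * real_of_int a2 + 2 * real q * sqrt (real q))"
  proof
    assume "weil_poly q 3 h"
    then obtain x y z where b: "\<bar>x\<bar> \<le> 2*sqrt (real q)" "\<bar>y\<bar> \<le> 2*sqrt (real q)" "\<bar>z\<bar> \<le> 2*sqrt (real q)"
     and e: "real_of_int a1 = -(x+y+z)" "real_of_int a2 = 3*real q + (x*y+x*z+y*z)"
     "real_of_int a3 = -(x*y*z) - 2*real q*(x+y+z)" unfolding W3[OF hq] by blast
    show "has_real_root h \<longleftrightarrow>
        \<bar>real_of_int a1\<bar> = 6 * sqrt (real q) \<or>
        4 * sqrt (real q) * \<bar>real_of_int a1\<bar> - 9 * real q = real_of_int a2 \<or>
        - 2 * real q * real_of_int a1 - 2 * sqrt (real q) * real_of_int a2 - 2 * real q * sqrt (real q) = real_of_int a3 \<or>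
        real_of_int a3 = - 2 * real q * real_of_int a1 + 2 * sqrt (real q) * real_of_int a2 + 2 * real q * sqrt (real q)"
      unfolding rootchar[OF b e] using RR[OF Qr r0 b e] .
  qed
  have P3: "weil_poly q 3 h \<and> has_real_root h \<longleftrightarrow> rhs q h"
  proof
    assume "rhs q h" thus "weil_poly q 3 h \<and> has_real_root h" by (rule P3back[OF q0])
  next
    assume wr: "weil_poly q 3 h \<and> has_real_root h"
    then obtain x y z where b: "\<bar>x\<bar> \<le> 2*sqrt (real q)" "\<bar>y\<bar> \<le> 2*sqrt (real q)" "\<bar>z\<bar> \<le> 2*sqrt (real q)"
     and e: "real_of_int a1 = -(x+y+z)" "real_of_int a2 = 3*real q + (x*y+x*z+y*z)"
     "real_of_int a3 = -(x*y*z) - 2*real q*(x+y+z)" unfolding W3[OF hq] by blast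
    have rt: "\<bar>x\<bar> = 2*sqrt (real q) \<or> \<bar>y\<bar> = 2*sqrt (real q) \<or> \<bar>z\<bar> = 2*sqrt (real q)"
      using rootchar[OF b e] wr by blast
    show "rhs q h"
    proof (cases "\<exists>s::nat. q = s ^ 2")
      case True
      then obtain s where qs: "q = s^2" by blast
      have s: "s > 0" using q0 qs by (cases s) auto
      have sq: "sqrt (real q) = real s" using qs by simp
      show ?thesis by (rule P3sq[OF hq qs s e]) (use b rt sq in auto)
    next
      case False
      have d: "- 2 * real q * real_of_int a1 - 2 * sqrt (real q) * real_of_int a2 - 2 * real q * sqrt (real q) = real_of_int a3 \<or>
        real_of_int a3 = - 2 * real q * real_of_int a1 + 2 * sqrt (real q) * real_of_int a2 + 2 * real q * sqrt (real q)"
        using RRd[OF Qr r0 b e] rt by blast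
      have "2 * a2 + 2 * int q = 0 \<and> a3 + 2 * int q * a1 = 0"
      proof -
        have "sqrt (real q) * real_of_int (2 * a2 + 2 * int q) + real_of_int (a3 + 2 * int q * a1) = 0 \<or>
              sqrt (real q) * real_of_int (2 * a2 + 2 * int q) + real_of_int (-(a3 + 2 * int q * a1)) = 0"
          using d by (simp add: algebra_simps) linarith
        thus ?thesis
        proof
          assume a: "sqrt (real q) * real_of_int (2 * a2 + 2 * int q) + real_of_int (a3 + 2 * int q * a1) = 0"
          have m0: "2 * a2 + 2 * int q = 0" by (rule sqrt_nonsquare[OF False a])
          have "real_of_int (a3 + 2 * int q * a1) = 0" using a m0 by (metis mult_zero_right of_int_0 add_0)
          hence "(a3 + 2 * int q * a1) = 0" by (simp only: of_int_eq_0_iff)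
          with m0 show ?thesis by simp
        next
          assume a: "sqrt (real q) * real_of_int (2 * a2 + 2 * int q) + real_of_int (-(a3 + 2 * int q * a1)) = 0"
          have m0: "2 * a2 + 2 * int q = 0" by (rule sqrt_nonsquare[OF False a])
          have "real_of_int (-(a3 + 2 * int q * a1)) = 0" using a m0 by (metis mult_zero_right of_int_0 add_0)
          hence "(-(a3 + 2 * int q * a1)) = 0" by (simp only: of_int_eq_0_iff)
          with m0 show ?thesis by simp
        qed
      qed
      hence a2e: "a2 = - int q" and a3e: "a3 = - 2 * int q * a1" by auto
      have hh: "h = [: - int q, 0, 1 :] ^ 2 * [: int q, a1, 1:]"
        unfolding hq a2e a3e by (simp add: algebra_simps power2_eq_square power3_eq_cube)
      have "4 * sqrt (real q) * \<bar>real_of_int a1\<bar> - 9 * real q \<le> real_of_int a2"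
        using CUB_fwd[OF Qr r0 b e] by blast
      hence "4 * sqrt (real q) * \<bar>real_of_int a1\<bar> \<le> 4 * sqrt (real q) * (2 * sqrt (real q))"
        using a2e by simp
      moreover have "0 < 4 * sqrt (real q)" using r0 by simp
      ultimately have "\<bar>real_of_int a1\<bar> \<le> 2 * sqrt (real q)" using mult_le_cancel_left_pos by blast
      hence ab: "\<bar>- real_of_int a1\<bar> \<le> 2 * sqrt (real q)" by simp
      have "map_poly real_of_int [: int q, a1, 1:] = prod_list (map (PP (real q)) [- real_of_int a1])"
        by (simp add: mapi_pCons PP_def)
      from WGL[OF _ _ this] ab have "weil_poly q 1 [: int q, a1, 1:]" by simp
      thus ?thesis unfolding rhs_def using False hh by blast
    qed
  qed
  show ?thesis using P1 P2 P3 unfolding rhs_def by blast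
qed

end
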